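(* Suppose $(T;C_1,\dots,C_w)$ forms a $w$-wheel ($w\ge4$) with sectors $S_1,\dots,S_w$ (indices modulo $w$). Then for all $i\neq j$, the set $C(i,j)=C_i\cup T\cup C_j$ is a $\kappa$-cut that disconnects $D(i,j)$ from the rest of the graph. Moreover, if $j-i\not\equiv 1$ and $j-i\not\equiv w-1\pmod w$, then $C(i,j)$ has exactly two sides, namely $D(i,j)$ and $D(j,i)$. Furthermore $|C_i|=\frac{\kappa-|T|}{2}$ for every $i$.
   Context: $G=(V,E)$ is a finite, simple, connected, undirected, non-complete graph; $\kappa$ is its vertex connectivity. A cut is a set $U\subset V$ whose removal disconnects $G$; a $\kappa$-cut is a cut of size $\kappa$; a side of a cut is a connected component of the graph after removing it. A set $S$ disconnects $P$ from the rest of the graph if $P\ne\emptyset$, $P\cap S=\emptyset$, $V\setminus(S\cup P)\ne\emptyset$ and every path from $P$ to $V\setminus(S\cup P)$ meets $S$. Wheels: for $w\ge4$ (indices modulo $w$), if $V$ is partitioned into pairwise disjoint sets $T,C_1,\dots,C_w,S_1,\dots,S_w$ with all $C_i,S_i$ nonempty ($T$ may be empty) such that for every $i$ the set $C_i\cup T\cup C_{i+2}$ is a $\kappa$-cut that disconnects $S_i\cup C_{i+1}\cup S_{i+1}$ from the rest of the graph, then $(T;C_1,\dots,C_w)$ forms a $w$-wheel with sectors $S_1,\dots,S_w$ (center $T$, spokes $C_i$). For $i\ne j$, $C(i,j)=C_i\cup T\cup C_j$ and $D(i,j)=S_i\cup C_{i+1}\cup S_{i+1}\cup\cdots\cup C_{j-1}\cup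 S_{j-1}$ (going cyclically from $i$ to $j-1$; in particular $D(i,i+1)=S_i$). *)

theory Defs
  imports "HOL.Complex_Main"
begin

definition simple_graph :: "'a set \<Rightarrow> ('a \<times> 'a) set \<Rightarrow> bool" where
  "simple_graph V E \<longleftrightarrow> finite V \<and> E \<subseteq> V \<times> V \<and> sym E \<and> (\<forall>x. (x, x) \<notin> E)"

definition reach_in :: "('a \<times> 'a) set \<Rightarrow> 'a set \<Rightarrow> 'a \<Rightarrow> 'a \<Rightarrow> bool" where
  "reach_in E W x y \<longleftrightarrow> x \<in> W \<and> y \<in> W \<and> (x, y) \<in> (E \<inter> (W \<times> W))\<^sup>*"

definition connected_on :: "('a \<times> 'a) set \<Rightarrow> 'a set \<Rightarrow> bool" where
  "connected_on E W \<longleftrightarrow> W \<noteq> {} \<and> (\<forall>x\<in>W. \<forall>y\<in>W. reach_in E W x y)"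

definition components_on :: "('a \<times> 'a) set \<Rightarrow> 'a set \<Rightarrow> 'a set set" where
  "components_on E W = {{y. reach_in E W x y} | x. x \<in> W}"

definition complete_graph :: "'a set \<Rightarrow> ('a \<times> 'a) set \<Rightarrow> bool" where
  "complete_graph V E \<longleftrightarrow> (\<forall>x\<in>V. \<forall>y\<in>V. x \<noteq> y \<longrightarrow> (x, y) \<in> E)"

definition is_cut :: "'a set \<Rightarrow> ('a \<times> 'a) set \<Rightarrow> 'a set \<Rightarrow> bool" where
  "is_cut V E U \<longleftrightarrow> U \<subset> V \<and> \<not> connected_on E (V - U)"

text \<open>Vertex connectivity (of a non-complete graph): minimum size of a cut.\<close>
definition kappa :: "'a set \<Rightarrow> ('a \<times> 'a) set \<Rightarrow> nat" where
  "kappa V E = Min (card ` {U. is_cut V E U})"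

definition kappa_cut :: "'a set \<Rightarrow> ('a \<times> 'a) set \<Rightarrow> 'a set \<Rightarrow> bool" where
  "kappa_cut V E U \<longleftrightarrow> is_cut V E U \<and> card U = kappa V E"

definition sides :: "'a set \<Rightarrow> ('a \<times> 'a) set \<Rightarrow> 'a set \<Rightarrow> 'a set set" where
  "sides V E U = components_on E (V - U)"

definition disconnects :: "'a set \<Rightarrow> ('a \<times> 'a) set \<Rightarrow> 'a set \<Rightarrow> 'a set \<Rightarrow> bool" where
  "disconnects V E S P \<longleftrightarrow> P \<noteq> {} \<and> P \<subseteq> V \<and> P \<inter> S = {} \<and> V - (S \<union> P) \<noteq> {} \<and>
     (\<forall>x\<in>P. \<forall>y\<in>V - (S \<union> P). \<not> reach_in E (V - S) x y)"

definition CC :: "nat \<Rightarrow> 'a set \<Rightarrow> (nat \<Rightarrow> 'a set) \<Rightarrow> nat \<Rightarrow> nat \<Rightarrow> 'a set" where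
  "CC w T C i j = C (i mod w) \<union> T \<union> C (j mod w)"

text \<open>D(i,j) = S_i \<union> C_{i+1} \<union> S_{i+1} \<union> ... \<union> C_{j-1} \<union> S_{j-1}, cyclically.\<close>
definition DD :: "nat \<Rightarrow> (nat \<Rightarrow> 'a set) \<Rightarrow> (nat \<Rightarrow> 'a set) \<Rightarrow> nat \<Rightarrow> nat \<Rightarrow> 'a set" where
  "DD w C S i j =
     (let m = (j mod w + w - i mod w) mod w in
      (\<Union>k\<in>{..<m}. S ((i + k) mod w)) \<union> (\<Union>k\<in>{1..<m}. C ((i + k) mod w)))"

definition is_wheel :: "'a set \<Rightarrow> ('a \<times> 'a) set \<Rightarrow> nat \<Rightarrow> 'a set \<Rightarrow> (nat \<Rightarrow> 'a set)
     \<Rightarrow> (nat \<Rightarrow> 'a set) \<Rightarrow> bool" where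
  "is_wheel V E w T C S \<longleftrightarrow>
     w \<ge> 4 \<and>
     V = T \<union> (\<Union>i\<in>{..<w}. C i) \<union> (\<Union>i\<in>{..<w}. S i) \<and>
     (\<forall>i<w. C i \<noteq> {} \<and> S i \<noteq> {} \<and> T \<inter> C i = {} \<and> T \<inter> S i = {}) \<and>
     (\<forall>i<w. \<forall>j<w. i \<noteq> j \<longrightarrow> C i \<inter> C j = {} \<and> S i \<inter> S j = {}) \<and>
     (\<forall>i<w. \<forall>j<w. C i \<inter> S j = {}) \<and>
     (\<forall>i<w. kappa_cut V E (CC w T C i (i + 2)) \<and>
        disconnects V E (CC w T C i (i + 2))
          (S i \<union> C ((i + 1) mod w) \<union> S ((i + 1) mod w)))"

end

theory Submission
  imports Defs
begin


lemma reach_refl: "x \<in> W \<Longrightarrow> reach_in E W x x" by (simp add: reach_in_def)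
lemma reach_edge: "x\<in>W \<Longrightarrow> y\<in>W \<Longrightarrow> (x,y)\<in>E \<Longrightarrow> reach_in E W x y"
  unfolding reach_in_def by (auto intro: r_into_rtrancl)
lemma reach_trans: "reach_in E W x y \<Longrightarrow> reach_in E W y z \<Longrightarrow> reach_in E W x z"
  unfolding reach_in_def by (meson rtrancl_trans)
lemma reach_sym: assumes "sym E" "reach_in E W x y" shows "reach_in E W y x"
proof -
  have "sym (E \<inter> W \<times> W)" using assms(1) by (auto simp: sym_def)
  hence "sym ((E \<inter> W \<times> W)\<^sup>*)" by (rule sym_rtrancl)
  thus ?thesis using assms(2) unfolding reach_in_def by (auto dest: symD)
qed
lemma reach_closed: assumes "reach_in E W x y" "x \<in> X"
  "\<And>a b. a \<in> X \<Longrightarrow> b \<in> W \<Longrightarrow> (a,b) \<in> E \<Longrightarrow> b \<in> X" shows "y \<in> X"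
proof -
  from assms(1) have "(x,y) \<in> (E \<inter> W\<times>W)\<^sup>*" by (simp add: reach_in_def)
  thus ?thesis using assms(2) by (induction rule: rtrancl_induct) (auto intro: assms(3))
qed

lemma kappa_le: assumes "finite V" "is_cut V E U" shows "kappa V E \<le> card U"
proof -
  have "{U. is_cut V E U} \<subseteq> Pow V" by (auto simp: is_cut_def)
  hence "finite {U. is_cut V E U}" using assms(1) by (meson finite_Pow_iff finite_subset)
  thus ?thesis unfolding kappa_def using assms(2) by (intro Min_le) auto
qed

lemma disc_out: assumes "simple_graph V E" "disconnects V E U P" "x \<in> P" "(x,y) \<in> E"
  shows "y \<in> U \<union> P"
proof (rule ccontr)
  assume a: "y \<notin> U \<union> P"
  have "y \<in> V" "x \<in> V" using assms(1,4) by (auto simp: simple_graph_def)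
  moreover have "x \<notin> U" using assms(2,3) by (auto simp: disconnects_def)
  ultimately have "reach_in E (V - U) x y" using a assms(4) by (intro reach_edge) auto
  thus False using assms(2,3) a \<open>y \<in> V\<close> by (auto simp: disconnects_def)
qed

lemma disc_cut: assumes "disconnects V E U P" "U \<subseteq> V" shows "is_cut V E U"
  using assms unfolding is_cut_def connected_on_def disconnects_def by blast



lemma dmod: "0 < d \<Longrightarrow> d < (w::nat) \<Longrightarrow> (a + d) mod w \<noteq> a mod w"
proof
  assume h: "0 < d" "d < w" "(a + d) mod w = a mod w"
  have e: "(a mod w + d) mod w = a mod w" using h(3) by (simp add: mod_add_left_eq)
  have l: "a mod w < w" using h by simp
  show False
  proof (cases "a mod w + d < w")
    case True thus False using e h(1) by simp
  next
    case False
    hence "(a mod w + d) mod w = (a mod w + d - w) mod w" by (simp add: le_mod_geq)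
    also have "\<dots> = a mod w + d - w" using l h(2) by (intro mod_less) linarith
    finally show False using e h(2) False by linarith
  qed
qed
lemma mm_cases: "i < (w::nat) \<Longrightarrow> j < w \<Longrightarrow> (j + w - i) mod w = (if i \<le> j then j - i else j + w - i)"
proof (cases "i \<le> j")
  case True
  assume "i < w" "j < w"
  hence "j + w - i = (j - i) + w" using True by simp
  hence "(j + w - i) mod w = (j - i) mod w" by simp
  thus ?thesis using True \<open>j<w\<close> by simp
next
  case False
  assume "i < w" "j < w"
  thus ?thesis using False by simp
qed




lemma mod_inj: "k < (w::nat) \<Longrightarrow> k' < w \<Longrightarrow> k \<noteq> k' \<Longrightarrow> (i + k) mod w \<noteq> (i + k') mod w"
proof -
  assume h: "k < w" "k' < w" "k \<noteq> k'"
  { fix a b :: nat assume "a < b" "b < w"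
    hence "(i + a + (b - a)) mod w \<noteq> (i + a) mod w" by (intro dmod) auto
    hence "(i + b) mod w \<noteq> (i + a) mod w" using \<open>a<b\<close> by simp }
  thus ?thesis using h by (metis linorder_neqE_nat)
qed

lemma im: "i < (w::nat) \<Longrightarrow> l < w \<Longrightarrow> (i + (l + w - i) mod w) mod w = l"
  by (auto simp: mm_cases)

locale wctx =
  fixes V :: "'a set" and E :: "('a \<times> 'a) set" and w :: nat and T :: "'a set"
    and C S :: "nat \<Rightarrow> 'a set"
  assumes sg: "simple_graph V E" and wh: "is_wheel V E w T C S"
begin

definition cc where "cc k = C (k mod w)"
definition ss where "ss k = S (k mod w)"

lemma w4: "4 \<le> w" using wh by (simp add: is_wheel_def)
lemma finV: "finite V" using sg by (simp add: simple_graph_def)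
lemma symE: "sym E" using sg by (simp add: simple_graph_def)
lemma EV: "(x,y) \<in> E \<Longrightarrow> y \<in> V" using sg by (auto simp: simple_graph_def)

lemma Vdef: "V = T \<union> (\<Union>i<w. cc i) \<union> (\<Union>i<w. ss i)"
proof -
  have "(\<Union>i<w. cc i) = (\<Union>i<w. C i)" "(\<Union>i<w. ss i) = (\<Union>i<w. S i)"
    by (auto simp: cc_def ss_def)
  thus ?thesis using wh by (simp add: is_wheel_def)
qed

lemma kmod: "k mod w < w" using w4 by simp

lemma cc_ne: "cc k \<noteq> {}" using wh kmod[of k] by (simp add: is_wheel_def cc_def)
lemma ss_ne: "ss k \<noteq> {}" using wh kmod[of k] by (simp add: is_wheel_def ss_def)
lemma T_cc: "T \<inter> cc k = {}" using wh kmod[of k] by (simp add: is_wheel_def cc_def)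
lemma T_ss: "T \<inter> ss k = {}" using wh kmod[of k] by (simp add: is_wheel_def ss_def)
lemma cc_ss: "cc a \<inter> ss b = {}" using wh kmod[of a] kmod[of b] by (simp add: is_wheel_def ss_def cc_def)
lemma cc_dis: "a mod w \<noteq> b mod w \<Longrightarrow> cc a \<inter> cc b = {}"
  using wh kmod[of a] kmod[of b] by (simp add: is_wheel_def cc_def)
lemma ss_dis: "a mod w \<noteq> b mod w \<Longrightarrow> ss a \<inter> ss b = {}"
  using wh kmod[of a] kmod[of b] by (simp add: is_wheel_def ss_def)
lemma cc_V: "cc k \<subseteq> V" using Vdef kmod[of k] by (auto simp: cc_def)
lemma ss_V: "ss k \<subseteq> V" using Vdef kmod[of k] by (auto simp: ss_def)
lemma T_V: "T \<subseteq> V" using Vdef by auto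
lemma cc_fin: "finite (cc k)" using cc_V finV finite_subset by blast
lemma cc_w: "cc (k + w) = cc k" by (simp add: cc_def)
lemma ss_w: "ss (k + w) = ss k" by (simp add: ss_def)
lemma cc_mod: "cc (k mod w) = cc k" by (simp add: cc_def)
lemma ss_mod: "ss (k mod w) = ss k" by (simp add: ss_def)

lemma ccd: "0 < d \<Longrightarrow> d < w \<Longrightarrow> cc (a + d) \<inter> cc a = {}" by (intro cc_dis dmod)
lemma ssd: "0 < d \<Longrightarrow> d < w \<Longrightarrow> ss (a + d) \<inter> ss a = {}" by (intro ss_dis dmod)

lemma cutk: "kappa_cut V E (cc k \<union> T \<union> cc (k+2)) \<and>
  disconnects V E (cc k \<union> T \<union> cc (k+2)) (ss k \<union> cc (k+1) \<union> ss (k+1))"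
proof -
  have "kappa_cut V E (CC w T C (k mod w) (k mod w + 2)) \<and>
        disconnects V E (CC w T C (k mod w) (k mod w + 2))
          (S (k mod w) \<union> C ((k mod w + 1) mod w) \<union> S ((k mod w + 1) mod w))"
  proof -
    have "\<forall>i<w. kappa_cut V E (CC w T C i (i + 2)) \<and> disconnects V E (CC w T C i (i + 2))
       (S i \<union> C ((i + 1) mod w) \<union> S ((i + 1) mod w))" using wh unfolding is_wheel_def by blast
    thus ?thesis using kmod[of k] by blast
  qed
  moreover have "(k mod w + 2) mod w = (k+2) mod w" "(k mod w + 1) mod w = (k+1) mod w"
    "k mod w mod w = k mod w" by (rule mod_add_left_eq)+ simp
  ultimately show ?thesis unfolding CC_def cc_def ss_def by (simp only:)
qed

lemma nbC: "x \<in> cc (k+1) \<Longrightarrow> (x,y) \<in> E \<Longrightarrow>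
   y \<in> cc k \<union> T \<union> cc (k+2) \<union> ss k \<union> cc (k+1) \<union> ss (k+1)"
  using disc_out[OF sg cutk[THEN conjunct2]] by blast

lemma nbS1: assumes "x \<in> ss (k+1)" "(x,y) \<in> E"
  shows "y \<in> ss (k+1) \<union> cc (k+1) \<union> cc (k+2) \<union> T"
proof -
  have c1: "disconnects V E (cc (k+1) \<union> T \<union> cc (k+3)) (ss (k+1) \<union> cc (k+2) \<union> ss (k+2))"
  proof -
    have "k+1+2 = k+3" "k+1+1 = k+2" by simp_all
    thus ?thesis using cutk[of "k+1"] by (simp only:)
  qed
  have 1: "y \<in> (cc (k+1) \<union> T \<union> cc (k+3)) \<union> (ss (k+1) \<union> cc (k+2) \<union> ss (k+2))"
    using disc_out[OF sg c1] assms by blast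
  have 2: "y \<in> (cc k \<union> T \<union> cc (k+2)) \<union> (ss k \<union> cc (k+1) \<union> ss (k+1))"
    using disc_out[OF sg cutk[of "k", THEN conjunct2]] assms by blast
  have d: "cc (k+3) \<inter> cc k = {}" "cc (k+3) \<inter> cc (k+1) = {}" "cc (k+3) \<inter> cc (k+2) = {}"
      "ss (k+2) \<inter> ss k = {}" "ss (k+2) \<inter> ss (k+1) = {}"
    using ccd[of 3 k] ccd[of 2 "k+1"] ccd[of 1 "k+2"] ssd[of 2 k] ssd[of 1 "k+1"] w4
    by (simp_all add: numeral_eq_Suc)
  show ?thesis using 1 2 d T_cc T_ss cc_ss by blast
qed

lemma nbS: assumes "x \<in> ss a" "(x,y) \<in> E"
  shows "y \<in> ss a \<union> cc a \<union> cc (a+1) \<union> T"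
proof -
  have e: "a + w - 1 + 1 = a + w" using w4 by simp
  have "y \<in> ss (a + w - 1 + 1) \<union> cc (a + w - 1 + 1) \<union> cc (a + w - 1 + 2) \<union> T"
    using assms by (intro nbS1) (simp_all only: e ss_w)
  moreover have "a + w - 1 + 2 = (a + 1) + w" using w4 by simp
  ultimately show ?thesis by (simp only: e ss_w cc_w)
qed

end


context wctx begin

definition mm where "mm i j = (j + w - i) mod w"
definition dd where "dd i j = (\<Union>k<mm i j. ss (i+k)) \<union> (\<Union>k\<in>{1..<mm i j}. cc (i+k))"

lemma DD_eq: "i < w \<Longrightarrow> j < w \<Longrightarrow> DD w C S i j = dd i j"
  by (simp add: DD_def dd_def mm_def cc_def ss_def Let_def)
lemma CC_eq: "CC w T C i j = cc i \<union> T \<union> cc j" by (simp add: CC_def cc_def)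

lemma mm_b: "i < w \<Longrightarrow> j < w \<Longrightarrow> i \<noteq> j \<Longrightarrow> 0 < mm i j \<and> mm i j < w"
  unfolding mm_def by (auto simp: mm_cases)
lemma mm_sym: "i < w \<Longrightarrow> j < w \<Longrightarrow> i \<noteq> j \<Longrightarrow> mm j i = w - mm i j"
  unfolding mm_def by (auto simp: mm_cases)
lemma cc_ij: "i < w \<Longrightarrow> j < w \<Longrightarrow> cc (i + mm i j) = cc j"
  unfolding mm_def cc_def using im[of i w j] by simp
lemma ss_ij: "i < w \<Longrightarrow> j < w \<Longrightarrow> ss (i + mm i j) = ss j"
  unfolding mm_def ss_def using im[of i w j] by simp

lemma ddS: "k < mm i j \<Longrightarrow> ss (i+k) \<subseteq> dd i j" by (auto simp: dd_def)
lemma ddC: "1 \<le> k \<Longrightarrow> k < mm i j \<Longrightarrow> cc (i+k) \<subseteq> dd i j" by (auto simp: dd_def)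
lemma dd_cases[consumes 1, case_names S C]: "x \<in> dd i j \<Longrightarrow> (\<And>k. k < mm i j \<Longrightarrow> x \<in> ss (i+k) \<Longrightarrow> P) \<Longrightarrow>
   (\<And>k. 1 \<le> k \<Longrightarrow> k < mm i j \<Longrightarrow> x \<in> cc (i+k) \<Longrightarrow> P) \<Longrightarrow> P"
  by (auto simp: dd_def)

lemma ccii: "cc (i + k) \<inter> cc (i + k') = {}" if "k < w" "k' < w" "k \<noteq> k'"
  using cc_dis mod_inj that by blast
lemma ssii: "ss (i + k) \<inter> ss (i + k') = {}" if "k < w" "k' < w" "k \<noteq> k'"
  using ss_dis mod_inj that by blast

context fixes i j assumes ij: "i < w" "j < w" "i \<noteq> j"
begin

lemma int_disj: "1 \<le> k \<Longrightarrow> k < mm i j \<Longrightarrow> cc (i+k) \<inter> (cc i \<union> T \<union> cc j) = {}"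
proof -
  assume k: "1 \<le> k" "k < mm i j"
  have m: "mm i j < w" using mm_b ij by blast
  have "cc (i+k) \<inter> cc (i+0) = {}" using k m by (intro ccii) auto
  moreover have "cc (i+k) \<inter> cc (i+mm i j) = {}" using k m by (intro ccii) auto
  ultimately show ?thesis using T_cc cc_ij ij by auto
qed

lemma dd_disj: "dd i j \<inter> (cc i \<union> T \<union> cc j) = {}"
proof -
  { fix x assume "x \<in> dd i j" "x \<in> cc i \<union> T \<union> cc j"
    hence False
    proof (cases rule: dd_cases)
      case (S k) thus False using \<open>x \<in> cc i \<union> T \<union> cc j\<close> cc_ss T_ss by blast
    next
      case (C k) thus False using \<open>x \<in> cc i \<union> T \<union> cc j\<close> int_disj by blast
    qed }
  thus ?thesis by blast
qed

lemma dd_V: "dd i j \<subseteq> V" using ss_V cc_V by (auto simp: dd_def)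

lemma ssj_out: "ss j \<inter> dd i j = {}"
proof -
  have m: "mm i j < w" using mm_b ij by blast
  { fix x assume "x \<in> dd i j" "x \<in> ss j"
    hence False
    proof (cases rule: dd_cases)
      case (S k)
      have "ss (i+k) \<inter> ss (i + mm i j) = {}" using S m by (intro ssii) auto
      thus False using S \<open>x \<in> ss j\<close> ss_ij ij by auto
    next
      case (C k) thus False using \<open>x \<in> ss j\<close> cc_ss by blast
    qed }
  thus ?thesis by blast
qed

lemma dd_closed: assumes "x \<in> dd i j" "(x,y) \<in> E" "y \<notin> cc i \<union> T \<union> cc j"
  shows "y \<in> dd i j"
  using assms(1)
proof (cases rule: dd_cases)
  case (S k)
  have "y \<in> ss (i+k) \<union> cc (i+k) \<union> cc (i+k+1) \<union> T" using nbS S assms(2) by blast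
  moreover have "y \<in> ss (i+k) \<Longrightarrow> ?thesis" using ddS S by blast
  moreover have "y \<in> cc (i+k) \<Longrightarrow> ?thesis"
  proof -
    assume y: "y \<in> cc (i+k)"
    show ?thesis proof (cases "k = 0")
      case True thus ?thesis using y assms(3) by simp
    next
      case False thus ?thesis using y ddC[of k i j] S by auto
    qed
  qed
  moreover have "y \<in> cc (i+k+1) \<Longrightarrow> ?thesis"
  proof -
    assume y: "y \<in> cc (i+k+1)"
    show ?thesis proof (cases "k + 1 = mm i j")
      case True hence "i+k+1 = i + mm i j" by simp
      hence "cc (i+k+1) = cc j" using cc_ij[OF ij(1,2)] by (simp only:)
      thus ?thesis using y assms(3) by blast
    next
      case False thus ?thesis using y ddC[of "k+1" i j] S by (auto simp: add.assoc)
    qed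
  qed
  ultimately show ?thesis using assms(3) by blast
next
  case (C k)
  then obtain k' where k': "k = k' + 1" by (metis add.commute le_Suc_ex)
  have "x \<in> cc (i+k'+1)" using C k' by (simp add: add.assoc)
  hence y: "y \<in> cc (i+k') \<union> T \<union> cc (i+k'+2) \<union> ss (i+k') \<union> cc (i+k'+1) \<union> ss (i+k'+1)"
    using nbC assms(2) by blast
  moreover have "y \<in> cc (i+k') \<Longrightarrow> ?thesis"
  proof -
    assume y: "y \<in> cc (i+k')"
    show ?thesis proof (cases "k' = 0")
      case True thus ?thesis using y assms(3) by simp
    next
      case False thus ?thesis using y ddC[of k' i j] C k' by auto
    qed
  qed
  moreover have "y \<in> cc (i+k'+2) \<Longrightarrow> ?thesis"
  proof -
    assume y: "y \<in> cc (i+k'+2)"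
    show ?thesis proof (cases "k' + 2 = mm i j")
      case True hence "i+k'+2 = i + mm i j" by simp
      hence "cc (i+k'+2) = cc j" using cc_ij[OF ij(1,2)] by (simp only:)
      thus ?thesis using y assms(3) by blast
    next
      case False thus ?thesis using y ddC[of "k'+2" i j] C k' by (auto simp: add.assoc)
    qed
  qed
  moreover have "y \<in> ss (i+k') \<Longrightarrow> ?thesis" using ddS[of k' i j] C k' by auto
  moreover have "y \<in> ss (i+k'+1) \<Longrightarrow> ?thesis" using ddS[of "k'+1" i j] C k' by (auto simp: add.assoc)
  moreover have "y \<in> cc (i+k'+1) \<Longrightarrow> ?thesis" using ddC[of "k'+1" i j] C k' by (auto simp: add.assoc)
  ultimately show ?thesis using assms(3) by blast
qed

lemma dd_disc: "disconnects V E (cc i \<union> T \<union> cc j) (dd i j)"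
proof -
  have m: "0 < mm i j" using mm_b ij by blast
  have "ss i \<subseteq> dd i j" using ddS[of 0 i j] m by simp
  hence ne: "dd i j \<noteq> {}" using ss_ne by blast
  have "ss j \<subseteq> V - (cc i \<union> T \<union> cc j \<union> dd i j)" using ss_V ssj_out T_ss cc_ss by blast
  hence ne2: "V - (cc i \<union> T \<union> cc j \<union> dd i j) \<noteq> {}" using ss_ne by blast
  have nr: "\<not> reach_in E (V - (cc i \<union> T \<union> cc j)) x y"
    if "x \<in> dd i j" "y \<in> V - (cc i \<union> T \<union> cc j \<union> dd i j)" for x y
  proof
    assume "reach_in E (V - (cc i \<union> T \<union> cc j)) x y"
    hence "y \<in> dd i j" using that(1) by (rule reach_closed) (use dd_closed in blast)
    thus False using that(2) by blast
  qed
  show ?thesis unfolding disconnects_def using ne ne2 dd_V dd_disj nr by blast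
qed

lemma cutij_V: "cc i \<union> T \<union> cc j \<subseteq> V" using cc_V T_V by blast

end
end


context wctx begin

lemma card3: "a mod w \<noteq> b mod w \<Longrightarrow> card (cc a \<union> T \<union> cc b) = card (cc a) + card T + card (cc b)"
proof -
  assume h: "a mod w \<noteq> b mod w"
  have fT: "finite T" using T_V finV finite_subset by blast
  have "card (cc a \<union> T) = card (cc a) + card T"
    using T_cc[of a] cc_fin fT by (intro card_Un_disjoint) auto
  moreover have "card (cc a \<union> T \<union> cc b) = card (cc a \<union> T) + card (cc b)"
    using T_cc[of b] cc_dis[OF h] cc_fin fT by (intro card_Un_disjoint) auto
  ultimately show ?thesis by simp
qed

lemma kap_k: "kappa V E = card (cc k) + card T + card (cc (k+2))"
proof -
  have "k mod w \<noteq> (k+2) mod w" using dmod[of 2 w k] w4 by simp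
  thus ?thesis using cutk[of k] card3 by (simp add: kappa_cut_def)
qed

lemma kap_le: "a mod w \<noteq> b mod w \<Longrightarrow> kappa V E \<le> card (cc a) + card T + card (cc b)"
proof -
  assume h: "a mod w \<noteq> b mod w"
  have "disconnects V E (cc (a mod w) \<union> T \<union> cc (b mod w)) (dd (a mod w) (b mod w))"
    using h kmod by (intro dd_disc) auto
  hence "is_cut V E (cc a \<union> T \<union> cc b)" using cc_V T_V by (intro disc_cut) (auto simp: cc_mod)
  hence "kappa V E \<le> card (cc a \<union> T \<union> cc b)" using finV kappa_le by blast
  thus ?thesis using card3[OF h] by simp
qed

lemma size: "2 * card (cc a) + card T = kappa V E"
proof -
  define k where "k = a + w - 1"
  have ka: "k + 1 = a + w" using w4 by (simp add: k_def)
  have d: "\<And>d x. 0 < d \<Longrightarrow> d < w \<Longrightarrow> (x + d) mod w \<noteq> x mod w" by (rule dmod)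
  have e1: "kappa V E = card (cc k) + card T + card (cc (k+2))" by (rule kap_k)
  have e2: "kappa V E = card (cc (k+1)) + card T + card (cc (k+1+2))" by (rule kap_k)
  have l1: "kappa V E \<le> card (cc k) + card T + card (cc (k+1))"
    using d[of 1 k] w4 by (intro kap_le) simp_all
  have l2: "kappa V E \<le> card (cc (k+2)) + card T + card (cc (k+2+1))"
    using d[of 1 "k+2"] w4 by (intro kap_le) (simp_all del: add_2_eq_Suc' add_2_eq_Suc)
  have l3: "kappa V E \<le> card (cc k) + card T + card (cc (k+3))"
    using d[of 3 k] w4 by (intro kap_le) simp_all
  have l4: "kappa V E \<le> card (cc (k+1)) + card T + card (cc (k+1+1))"
    using d[of 1 "k+1"] w4 by (intro kap_le) (simp_all del: add_2_eq_Suc' add_2_eq_Suc)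
  have q: "k+1+2 = k+3" "k+2+1 = k+3" "k+1+1 = k+2" by simp_all
  have "2 * card (cc (k+1)) + card T = kappa V E" using e1 e2 l1 l2 l3 l4 unfolding q by linarith
  thus ?thesis using ka cc_w by simp
qed

end


context wctx begin

lemma compA: assumes "T \<subseteq> U" "ss a \<inter> U = {}" "v \<in> ss a"
  shows "cc a \<subseteq> {y. reach_in E (V - U) v y} \<union> U \<and> cc (a+1) \<subseteq> {y. reach_in E (V - U) v y} \<union> U"
proof -
  define K where "K = {y. reach_in E (V - U) v y}"
  define Q where "Q = K \<union> U"
  define N where "N = T \<union> (cc a \<inter> Q) \<union> (cc (a+1) \<inter> Q)"
  define X where "X = K \<inter> ss a"
  have vV: "v \<in> V - U" using assms ss_V by blast
  hence vK: "v \<in> K" by (simp add: K_def reach_refl)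
  have clo: "q \<in> X" if "p \<in> X" "q \<in> V - N" "(p,q) \<in> E" for p q
  proof -
    have pK: "reach_in E (V - U) v p" and pa: "p \<in> ss a" using that(1) by (auto simp: X_def K_def)
    have pW: "p \<in> V - U" using pa assms(2) ss_V by blast
    have q: "q \<in> ss a \<union> cc a \<union> cc (a+1) \<union> T" using nbS pa that(3) by blast
    have qT: "q \<notin> T" using that(2) by (simp add: N_def)
    have "q \<in> V - U \<Longrightarrow> q \<in> K"
      using reach_trans[OF pK reach_edge[OF pW _ that(3)]] by (simp add: K_def)
    moreover have "q \<notin> cc a \<union> cc (a+1) \<or> q \<notin> U" using that(2) by (auto simp: N_def Q_def)
    moreover have "q \<in> cc a \<union> cc (a+1) \<Longrightarrow> q \<notin> K" using that(2) by (auto simp: N_def Q_def)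
    ultimately show ?thesis using q qT that(2) assms(2) by (auto simp: X_def)
  qed
  obtain z where z: "z \<in> ss (a+2)" using ss_ne by blast
  have zN: "z \<in> V - N" using z ss_V T_ss cc_ss unfolding N_def by blast
  have zX: "z \<notin> X" using z ssd[of 2 a] w4 unfolding X_def by auto
  have vN: "v \<in> V - N" using vV assms(3) T_ss cc_ss unfolding N_def by blast
  have vX: "v \<in> X" using vK assms(3) by (simp add: X_def)
  have NV: "N \<subseteq> V" using T_V cc_V unfolding N_def by blast
  have "is_cut V E N" unfolding is_cut_def
  proof
    show "N \<subset> V" using NV vN by blast
    show "\<not> connected_on E (V - N)"
    proof
      assume "connected_on E (V - N)"
      hence "reach_in E (V - N) v z" using vN zN by (simp add: connected_on_def)
      hence "z \<in> X" using vX by (rule reach_closed) (use clo in blast)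
      thus False using zX by blast
    qed
  qed
  hence "kappa V E \<le> card N" using finV kappa_le by blast
  also have "card N \<le> card (T \<union> (cc a \<inter> Q)) + card (cc (a+1) \<inter> Q)" unfolding N_def by (rule card_Un_le)
  also have "\<dots> \<le> card T + card (cc a \<inter> Q) + card (cc (a+1) \<inter> Q)" using card_Un_le by simp
  finally have kN: "kappa V E \<le> card T + card (cc a \<inter> Q) + card (cc (a+1) \<inter> Q)" .
  have m1: "card (cc a \<inter> Q) \<le> card (cc a)" using cc_fin by (intro card_mono) auto
  have m2: "card (cc (a+1) \<inter> Q) \<le> card (cc (a+1))" using cc_fin by (intro card_mono) auto
  have "card (cc a \<inter> Q) = card (cc a)" "card (cc (a+1) \<inter> Q) = card (cc (a+1))"
    using kN m1 m2 size[of a] size[of "a+1"] by linarith+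
  hence "cc a \<inter> Q = cc a" "cc (a+1) \<inter> Q = cc (a+1)"
    using card_subset_eq[OF cc_fin[of a], of "cc a \<inter> Q"] card_subset_eq[OF cc_fin[of "a+1"], of "cc (a+1) \<inter> Q"]
    by blast+
  thus ?thesis unfolding Q_def K_def by blast
qed

context fixes i j assumes ij: "i < w" "j < w" "i \<noteq> j"
begin

lemma dd_conn: assumes m2: "2 \<le> mm i j" and x: "x \<in> dd i j" and y: "y \<in> dd i j"
  shows "reach_in E (V - (cc i \<union> T \<union> cc j)) x y"
proof -
  define U where "U = cc i \<union> T \<union> cc j"
  define W where "W = V - U"
  have TU: "T \<subseteq> U" by (auto simp: U_def)
  have sU: "\<And>a. ss a \<inter> U = {}" using T_ss cc_ss unfolding U_def by blast
  have intr: "\<And>k. 1 \<le> k \<Longrightarrow> k < mm i j \<Longrightarrow> cc (i+k) \<inter> U = {}" unfolding U_def using int_disj[OF ij] by blast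
  have cA1: "cc a \<subseteq> {y. reach_in E W v y} \<union> U" and cA2: "cc (a+1) \<subseteq> {y. reach_in E W v y} \<union> U"
    if "v \<in> ss a" for a v using compA[OF TU sU that] unfolding W_def by blast+
  obtain s0 where s0: "s0 \<in> ss i" using ss_ne by blast
  define R where "R = {y. reach_in E W s0 y}"
  have sy: "\<And>a b. reach_in E W a b \<Longrightarrow> reach_in E W b a" by (rule reach_sym[OF symE])
  have join: "y \<in> R" if "u \<in> R" "reach_in E W y u" for u y
  proof -
    have "reach_in E W s0 u" using that(1) by (simp add: R_def)
    moreover have "reach_in E W u y" using sy[OF that(2)] .
    ultimately show ?thesis unfolding R_def by (blast intro: reach_trans)
  qed
  have ext: "y \<in> R" if "u \<in> R" "reach_in E W u y" for u y
  proof -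
    have "reach_in E W s0 u" using that(1) by (simp add: R_def)
    thus ?thesis using that(2) unfolding R_def by (blast intro: reach_trans)
  qed
  have main: "\<forall>k. k < mm i j \<longrightarrow> ss (i+k) \<subseteq> R \<and> (1 \<le> k \<longrightarrow> cc (i+k) \<subseteq> R)"
  proof
    fix k show "k < mm i j \<longrightarrow> ss (i+k) \<subseteq> R \<and> (1 \<le> k \<longrightarrow> cc (i+k) \<subseteq> R)"
    proof (induction k)
      case 0
      have I: "cc (i+1) \<inter> U = {}" using intr[of 1] m2 by simp
      obtain u where u: "u \<in> cc (i+1)" using cc_ne by blast
      have "reach_in E W s0 u" using cA2[OF s0] I u by blast
      hence uR: "u \<in> R" by (simp add: R_def)
      have "ss i \<subseteq> R"
      proof
        fix y assume "y \<in> ss i"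
        hence "reach_in E W y u" using cA2 I u by blast
        thus "y \<in> R" using join uR by blast
      qed
      thus ?case by simp
    next
      case (Suc k)
      show ?case
      proof
        assume k1: "Suc k < mm i j"
        hence IH: "ss (i+k) \<subseteq> R" using Suc by simp
        obtain y' where y': "y' \<in> ss (i+k)" using ss_ne by blast
        have y'R: "y' \<in> R" using IH y' by blast
        have I: "cc (i + Suc k) \<inter> U = {}" using intr[of "Suc k"] k1 by simp
        have "cc (i+k+1) \<subseteq> {y. reach_in E W y' y}" using cA2[OF y'] I by auto
        hence cR: "cc (i + Suc k) \<subseteq> R" using ext y'R by auto
        obtain u where u: "u \<in> cc (i + Suc k)" using cc_ne by blast
        have uR: "u \<in> R" using cR u by blast
        have "ss (i + Suc k) \<subseteq> R"
        proof
          fix y assume "y \<in> ss (i + Suc k)"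
          hence "reach_in E W y u" using cA1 I u by blast
          thus "y \<in> R" using join uR by blast
        qed
        thus "ss (i + Suc k) \<subseteq> R \<and> (1 \<le> Suc k \<longrightarrow> cc (i + Suc k) \<subseteq> R)" using cR by blast
      qed
    qed
  qed
  have "dd i j \<subseteq> R"
  proof
    fix z assume "z \<in> dd i j" thus "z \<in> R" by (cases rule: dd_cases) (use main in blast)+
  qed
  hence "reach_in E W s0 x" "reach_in E W s0 y" using x y by (auto simp: R_def)
  hence "reach_in E W x y" using sy reach_trans by metis
  thus ?thesis unfolding W_def U_def .
qed

lemma cover: "V - (cc i \<union> T \<union> cc j) \<subseteq> dd i j \<union> dd j i"
proof
  fix x assume x: "x \<in> V - (cc i \<union> T \<union> cc j)"
  define m where "m = mm i j"
  have m: "0 < m" "m < w" "mm j i = w - m" using mm_b[OF ij] mm_sym[OF ij] by (auto simp: m_def)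
  have jm: "j = (i + m) mod w" using im[of i w j] ij by (simp add: m_def mm_def)
  have idx: "\<exists>k<w. (i + k) mod w = l mod w" for l
    using im[of i w "l mod w"] ij kmod[of l] by (intro exI[of _ "(l mod w + w - i) mod w"]) simp
  have shift: "(j + (k - m)) mod w = (i + k) mod w" if "m \<le> k" for k
  proof -
    have "(j + (k - m)) mod w = ((i + m) mod w + (k - m)) mod w" using jm by simp
    also have "\<dots> = (i + m + (k - m)) mod w" by (rule mod_add_left_eq)
    also have "\<dots> = (i + k) mod w" using that by simp
    finally show ?thesis .
  qed
  from x Vdef obtain l where "x \<in> cc l \<or> x \<in> ss l" by blast
  then obtain k where k: "k < w" "x \<in> cc (i+k) \<or> x \<in> ss (i+k)"
    using idx by (metis cc_mod ss_mod)
  show "x \<in> dd i j \<union> dd j i"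
  proof (cases "k < m")
    case True
    show ?thesis proof (cases "x \<in> ss (i+k)")
      case True thus ?thesis using ddS[of k i j] \<open>k<m\<close> m_def by auto
    next
      case False
      hence xc: "x \<in> cc (i+k)" using k by blast
      have "k \<noteq> 0"
      proof
        assume "k = 0" thus False using x xc by simp
      qed
      thus ?thesis using xc ddC[of k i j] \<open>k<m\<close> m_def by auto
    qed
  next
    case False
    hence km: "m \<le> k" by simp
    have e1: "cc (j + (k - m)) = cc (i+k)" "ss (j + (k-m)) = ss (i+k)"
      using shift[OF km] unfolding cc_def ss_def by simp_all
    have kl: "k - m < mm j i" using m k km by simp
    show ?thesis proof (cases "x \<in> ss (i+k)")
      case True thus ?thesis using ddS[of "k-m" j i] kl e1 by auto
    next
      case False
      hence xc: "x \<in> cc (i+k)" using k by blast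
      have "k \<noteq> m"
      proof
        assume "k = m"
        hence "cc (i+k) = cc j" using cc_ij[OF ij(1,2)] m_def by simp
        thus False using xc x by blast
      qed
      hence "1 \<le> k - m" using km by simp
      hence "cc (j + (k - m)) \<subseteq> dd j i" using ddC[of "k-m" j i] kl by blast
      thus ?thesis using xc e1 by blast
    qed
  qed
qed

end

lemma sides_eq: assumes ij: "i < w" "j < w" "i \<noteq> j" and m: "2 \<le> mm i j" "mm i j \<le> w - 2"
  shows "sides V E (cc i \<union> T \<union> cc j) = {dd i j, dd j i}"
proof -
  have ji: "j < w" "i < w" "j \<noteq> i" using ij by auto
  have m': "2 \<le> mm j i" using mm_sym[OF ij] m mm_b[OF ij] by simp
  have Ueq: "cc j \<union> T \<union> cc i = cc i \<union> T \<union> cc j" by blast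
  define W where "W = V - (cc i \<union> T \<union> cc j)"
  have comp1: "{y. reach_in E W x y} = dd i j" if "x \<in> dd i j" for x
  proof
    show "{y. reach_in E W x y} \<subseteq> dd i j"
    proof
      fix y assume "y \<in> {y. reach_in E W x y}"
      thus "y \<in> dd i j" using that by (intro reach_closed[of E W x y]) (auto simp: W_def intro: dd_closed[OF ij])
    qed
    show "dd i j \<subseteq> {y. reach_in E W x y}" using dd_conn[OF ij m(1) that] W_def by auto
  qed
  have comp2: "{y. reach_in E W x y} = dd j i" if "x \<in> dd j i" for x
  proof
    show "{y. reach_in E W x y} \<subseteq> dd j i"
    proof
      fix y assume "y \<in> {y. reach_in E W x y}"
      thus "y \<in> dd j i" using that dd_closed[OF ji] Ueq
        by (intro reach_closed[of E W x y]) (auto simp: W_def)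
    qed
    show "dd j i \<subseteq> {y. reach_in E W x y}" using dd_conn[OF ji m' that] W_def Ueq by auto
  qed
  have d1: "dd i j \<subseteq> W" using dd_V[OF ij] dd_disj[OF ij] W_def by blast
  have d2: "dd j i \<subseteq> W" using dd_V[OF ji] dd_disj[OF ji] W_def Ueq by blast
  obtain x1 where x1: "x1 \<in> dd i j" using dd_disc[OF ij] by (auto simp: disconnects_def)
  obtain x2 where x2: "x2 \<in> dd j i" using dd_disc[OF ji] by (auto simp: disconnects_def)
  have cov: "W \<subseteq> dd i j \<union> dd j i" using cover[OF ij] W_def by blast
  show ?thesis unfolding sides_def components_on_def W_def[symmetric]
  proof
    show "{{y. reach_in E W x y} |x. x \<in> W} \<subseteq> {dd i j, dd j i}" using cov comp1 comp2 by blast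
    show "{dd i j, dd j i} \<subseteq> {{y. reach_in E W x y} |x. x \<in> W}"
      using comp1[OF x1] comp2[OF x2] x1 x2 d1 d2 by blast
  qed
qed

end



theorem lemma3:
  fixes V :: "'a set" and E :: "('a \<times> 'a) set" and w :: nat
    and T :: "'a set" and C S :: "nat \<Rightarrow> 'a set"
  assumes "simple_graph V E"
    and "connected_on E V"
    and "\<not> complete_graph V E"
    and "is_wheel V E w T C S"
  shows "(\<forall>i<w. \<forall>j<w. i \<noteq> j \<longrightarrow>
            kappa_cut V E (CC w T C i j) \<and> disconnects V E (CC w T C i j) (DD w C S i j))
       \<and> (\<forall>i<w. \<forall>j<w. i \<noteq> j \<and> (j + w - i) mod w \<noteq> 1 \<and> (j + w - i) mod w \<noteq> w - 1 \<longrightarrow>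
            sides V E (CC w T C i j) = {DD w C S i j, DD w C S j i})
       \<and> (\<forall>i<w. real (card (C i)) = (real (kappa V E) - real (card T)) / 2)"
proof -
  interpret W: wctx V E w T C S using assms(1,4) by (rule wctx.intro)
  have P1: "\<forall>i<w. \<forall>j<w. i \<noteq> j \<longrightarrow>
            kappa_cut V E (CC w T C i j) \<and> disconnects V E (CC w T C i j) (DD w C S i j)"
  proof (intro allI impI)
    fix i j assume h: "i < w" "j < w" "i \<noteq> j"
    have d: "disconnects V E (W.cc i \<union> T \<union> W.cc j) (W.dd i j)" by (rule W.dd_disc[OF h])
    have c: "is_cut V E (W.cc i \<union> T \<union> W.cc j)" by (rule disc_cut[OF d W.cutij_V[OF h]])
    have "i mod w \<noteq> j mod w" using h by simp
    hence "card (W.cc i \<union> T \<union> W.cc j) = kappa V E"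
      using W.card3 W.size[of i] W.size[of j] by simp
    thus "kappa_cut V E (CC w T C i j) \<and> disconnects V E (CC w T C i j) (DD w C S i j)"
      using c d W.CC_eq W.DD_eq[OF h(1,2)] by (simp add: kappa_cut_def)
  qed
  have P2: "\<forall>i<w. \<forall>j<w. i \<noteq> j \<and> (j + w - i) mod w \<noteq> 1 \<and> (j + w - i) mod w \<noteq> w - 1 \<longrightarrow>
            sides V E (CC w T C i j) = {DD w C S i j, DD w C S j i}"
  proof (intro allI impI)
    fix i j assume h0: "i < w" "j < w" "i \<noteq> j \<and> (j + w - i) mod w \<noteq> 1 \<and> (j + w - i) mod w \<noteq> w - 1"
    hence h: "i < w" "j < w" "i \<noteq> j" by auto
    have a: "0 < W.mm i j \<and> W.mm i j < w" by (rule W.mm_b[OF h])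
    have b: "W.mm i j \<noteq> 1" "W.mm i j \<noteq> w - 1" using h0 by (simp_all add: W.mm_def)
    have "2 \<le> W.mm i j" "W.mm i j \<le> w - 2" using a b by linarith+
    thus "sides V E (CC w T C i j) = {DD w C S i j, DD w C S j i}"
      using W.sides_eq[OF h] W.CC_eq W.DD_eq h by simp
  qed
  have P3: "\<forall>i<w. real (card (C i)) = (real (kappa V E) - real (card T)) / 2"
  proof (intro allI impI)
    fix i assume "i < w"
    hence "W.cc i = C i" by (simp add: W.cc_def)
    hence "2 * card (C i) + card T = kappa V E" using W.size[of i] by simp
    hence "2 * real (card (C i)) + real (card T) = real (kappa V E)" by (metis of_nat_add of_nat_mult of_nat_numeral)
    thus "real (card (C i)) = (real (kappa V E) - real (card T)) / 2" by simp
  qed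
  show ?thesis using P1 P2 P3 by blast
qed

end
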